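(* Let $N\ge 2$, $d\ge1$. Let $\bar{\mathscr L}\in\mathbb{R}^{N\times N}$ be a real symmetric matrix with zero row sums whose eigenvalues are $0$ (simple) and $\gamma$ with multiplicity $N-1$. Let $\mathscr B\in\mathbb{R}^{N\times N}$ be symmetric with all row sums equal to $e$. Let $\epsilon,\lambda,d^{[1]}\in\mathbb{R}$, let $t\mapsto \mathbf x_s(t),\mathbf y_s(t)\in\mathbb{R}^d$ be given, and let $F_1,F_2:\mathbb{R}^d\to\mathbb{R}^d$, $G^{[1]},G^{[2]},H_1,H_2:\mathbb{R}^d\times\mathbb{R}^d\to\mathbb{R}^d$ be continuously differentiable. Write $J$ (resp. $D$) for the Jacobian with respect to the first (resp. second) argument, all evaluated along $(\mathbf x_s,\mathbf x_s)$, $(\mathbf y_s,\mathbf y_s)$, $(\mathbf x_s,\mathbf y_s)$ or $(\mathbf y_s,\mathbf x_s)$ as appropriate. Consider the linear system for $\delta\bar{\mathbf x},\delta\bar{\mathbf y}\in\mathbb{R}^{Nd}$: $$\delta\dot{\bar{\mathbf x}}=\big[I_N\otimes\big(JF_1(\mathbf x_s)+\epsilon d^{[1]}(JG^{[1]}(\mathbf x_s,\mathbf x_s)+DG^{[1]}(\mathbf x_s,\mathbf x_s))+\lambda e\,JH_1(\mathbf x_s,\mathbf y_s)\big)-\epsilon\,\bar{\mathscr L}\otimes DG^{[1]}(\mathbf x_s,\mathbf x_s)\big]\delta\bar{\mathbf x}+\lambda\,(\mathscr B\otimes DH_1(\mathbf x_s,\mathbf y_s))\,\delta\bar{\mathbf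 y},$$ $$\delta\dot{\bar{\mathbf y}}=\big[I_N\otimes\big(JF_2(\mathbf y_s)+\epsilon d^{[1]}(JG^{[2]}(\mathbf y_s,\mathbf y_s)+DG^{[2]}(\mathbf y_s,\mathbf y_s))+\lambda e\,JH_2(\mathbf y_s,\mathbf x_s)\big)-\epsilon\,\bar{\mathscr L}\otimes DG^{[2]}(\mathbf y_s,\mathbf y_s)\big]\delta\bar{\mathbf y}+\lambda\,(\mathscr B\otimes DH_2(\mathbf y_s,\mathbf x_s))\,\delta\bar{\mathbf x}.$$ Let $e,\Gamma_2,\dots,\Gamma_N$ be the eigenvalues of $\mathscr B$, where $e$ corresponds to the eigenvector $\mathbf 1=(1,\dots,1)^{tr}$. Then there is an orthogonal matrix $V\in\mathbb{R}^{N\times N}$ with first column $\mathbf 1/\sqrt N$ such that, writing $\eta^{(\bar{\mathbf x})}=(V\otimes I_d)^{tr}\delta\bar{\mathbf x}$ and $\eta^{(\bar{\mathbf y})}=(V\otimes I_d)^{tr}\delta\bar{\mathbf y}$ with $d$-dimensional blocks $\eta^{(\bar{\mathbf x})}_{i},\eta^{(\bar{\mathbf y})}_{i}$, $i=1,\dots,N$, each pair $(\eta^{(\bar{\mathbf x})}_{i},\eta^{(\bar{\mathbf y})}_{i})$ for $i=2,\dots,N$ satisfies the closed $2d$-dimensional system $$\dot\eta^{(\bar{\mathbf x})}_{i}=\big[JF_1(\mathbf x_s)+\epsilon d^{[1]}(JG^{[1]}+DG^{[1]})(\mathbf x_s,\mathbf x_s)-\epsilon\gamma\,DG^{[1]}(\mathbf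 x_s,\mathbf x_s)+\lambda e\,JH_1(\mathbf x_s,\mathbf y_s)\big]\eta^{(\bar{\mathbf x})}_{i}+\lambda\Gamma_i\,DH_1(\mathbf x_s,\mathbf y_s)\eta^{(\bar{\mathbf y})}_{i},$$ $$\dot\eta^{(\bar{\mathbf y})}_{i}=\big[JF_2(\mathbf y_s)+\epsilon d^{[1]}(JG^{[2]}+DG^{[2]})(\mathbf y_s,\mathbf y_s)-\epsilon\gamma\,DG^{[2]}(\mathbf y_s,\mathbf y_s)+\lambda e\,JH_2(\mathbf y_s,\mathbf x_s)\big]\eta^{(\bar{\mathbf y})}_{i}+\lambda\Gamma_i\,DH_2(\mathbf y_s,\mathbf x_s)\eta^{(\bar{\mathbf x})}_{i},$$ i.e. the $2d(N-1)$-dimensional transverse error system decouples into $N-1$ independent $2d$-dimensional linear systems.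
   Context: This is the linearization, about an intralayer synchronous solution $(\mathbf x_s,\mathbf y_s)$, of a two-layer network with a single intralayer connection type (tier), with time-averaged intralayer Laplacian $\bar{\mathscr L}$ (identical in both layers), common interlayer adjacency $\mathscr B^{[1]}=\mathscr B^{[2]}=\mathscr B$ with constant interlayer degree $e$, constant intralayer degree $d^{[1]}$, intralayer coupling strength $\epsilon$ and interlayer coupling strength $\lambda$. The pair $(\eta^{(\bar{\mathbf x})}_1,\eta^{(\bar{\mathbf y})}_1)$ describes the mode parallel to the synchronization manifold, and the pairs with $i\ge2$ the transverse modes. *)

theory Defs
  imports "HOL-Analysis.Analysis"
begin

text \<open>Kronecker product of matrices; vectors in R^(N d) are indexed by pairs (i,k),
  i the node index (block), k the coordinate inside the d-dimensional block.\<close>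
definition kron :: "real^'n^'m \<Rightarrow> real^'q^'p \<Rightarrow> real^('n \<times> 'q)^('m \<times> 'p)" where
  "kron A B = (\<chi> ik. \<chi> jl. A $ fst ik $ fst jl * B $ snd ik $ snd jl)"

definition blk :: "real^('n::finite \<times> 'd::finite) \<Rightarrow> 'n \<Rightarrow> real^'d" where
  "blk z i = (\<chi> k. z $ (i, k))"

definition C1_map :: "('a::real_normed_vector \<Rightarrow> 'b::real_normed_vector) \<Rightarrow> bool" where
  "C1_map f \<longleftrightarrow> (\<exists>f'. (\<forall>x. (f has_derivative blinfun_apply (f' x)) (at x)) \<and> continuous_on UNIV f')"

definition jac :: "(real^'d \<Rightarrow> real^'e) \<Rightarrow> real^'d \<Rightarrow> real^'d^'e" where
  "jac F x = matrix (frechet_derivative F (at x))"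

definition jacJ :: "(real^'d \<Rightarrow> real^'c \<Rightarrow> real^'e) \<Rightarrow> real^'d \<Rightarrow> real^'c \<Rightarrow> real^'d^'e" where
  "jacJ G x y = matrix (frechet_derivative (\<lambda>u. G u y) (at x))"

definition jacD :: "(real^'d \<Rightarrow> real^'c \<Rightarrow> real^'e) \<Rightarrow> real^'d \<Rightarrow> real^'c \<Rightarrow> real^'c^'e" where
  "jacD G x y = matrix (frechet_derivative (\<lambda>v. G x v) (at y))"

end

theory Submission
  imports Defs
begin



lemma blk_comp: "blk z i $ k = z $ (i,k)" by (simp add: blk_def)

lemma sum_UNIV_pair: "(\<Sum>p\<in>(UNIV::('a::finite\<times>'b::finite) set). f p) = (\<Sum>a\<in>UNIV. \<Sum>b\<in>UNIV. f (a,b))"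
  by (simp add: sum.cartesian_product UNIV_Times_UNIV[symmetric] del: UNIV_Times_UNIV)

lemma blk_WT:
  fixes V :: "real^'n^'n" and z :: "real^('n::finite \<times> 'd::finite)"
  shows "blk (transpose (kron V (mat 1 :: real^'d^'d)) *v z) i = (\<Sum>j\<in>UNIV. V$j$i *\<^sub>R blk z j)"
proof -
  have inner: "(\<Sum>l\<in>UNIV. V $ j $ i * (mat 1 :: real^'d^'d) $ l $ k * z $ (j, l)) = V$j$i * z $ (j,k)" for j k
  proof -
    have "(\<Sum>l\<in>UNIV. V $ j $ i * (mat 1 :: real^'d^'d) $ l $ k * z $ (j, l)) = (\<Sum>l\<in>UNIV. if l = k then V $ j $ i * z $ (j, l) else 0)"
      by (rule sum.cong) (auto simp: mat_def)
    then show ?thesis by simp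
  qed
  then show ?thesis
    by (simp add: vec_eq_iff blk_def matrix_vector_mult_def transpose_def kron_def sum_UNIV_pair sum_component del: transpose_matrix_vector)
qed

lemma blk_kron:
  fixes P :: "real^'n^'n" and Q :: "real^'d^'d" and z :: "real^('n::finite \<times> 'd::finite)"
  shows "blk (kron P Q *v z) j = (\<Sum>m\<in>UNIV. P$j$m *\<^sub>R (Q *v blk z m))"
  by (simp add: vec_eq_iff blk_def matrix_vector_mult_def kron_def sum_UNIV_pair sum_component sum_distrib_left mult.assoc)

lemma blk_add: "blk (x + y) i = blk x i + blk y i" by (simp add: blk_def vec_eq_iff)
lemma blk_diff: "blk (x - y) i = blk x i - blk y i" by (simp add: blk_def vec_eq_iff)
lemma blk_scaleR: "blk (c *\<^sub>R x) i = c *\<^sub>R blk x i" by (simp add: blk_def vec_eq_iff)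

lemma key:
  fixes V P :: "real^'n^'n" and Q :: "real^'d^'d" and z :: "real^('n::finite \<times> 'd::finite)"
  assumes "transpose P = P" "P *v column i V = c *\<^sub>R column i V"
  shows "blk (transpose (kron V (mat 1 :: real^'d^'d)) *v (kron P Q *v z)) i
       = c *\<^sub>R (Q *v blk (transpose (kron V (mat 1 :: real^'d^'d)) *v z) i)"
proof -
  have ev: "\<And>m. (\<Sum>j\<in>UNIV. V$j$i * P$j$m) = c * V$m$i"
  proof -
    fix m
    have "(P *v column i V) $ m = c * V$m$i" using assms(2) by (simp add: column_def)
    moreover have "(P *v column i V) $ m = (\<Sum>j\<in>UNIV. P$m$j * V$j$i)" by (simp add: matrix_vector_mult_def column_def)
    moreover have "P$m$j = P$j$m" for j using assms(1) by (metis transpose_def vec_lambda_beta)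
    ultimately show "(\<Sum>j\<in>UNIV. V$j$i * P$j$m) = c * V$m$i" by (simp add: mult.commute)
  qed
  have "blk (transpose (kron V (mat 1 :: real^'d^'d)) *v (kron P Q *v z)) i
     = (\<Sum>j\<in>UNIV. V$j$i *\<^sub>R (\<Sum>m\<in>UNIV. P$j$m *\<^sub>R (Q *v blk z m)))"
    by (simp only: blk_WT blk_kron)
  also have "\<dots> = (\<Sum>m\<in>UNIV. (\<Sum>j\<in>UNIV. V$j$i * P$j$m) *\<^sub>R (Q *v blk z m))"
    by (simp add: scaleR_sum_right scaleR_sum_left) (rule sum.swap)
  also have "\<dots> = (\<Sum>m\<in>UNIV. (c * V$m$i) *\<^sub>R (Q *v blk z m))" by (simp add: ev)
  also have "\<dots> = c *\<^sub>R (Q *v (\<Sum>m\<in>UNIV. V$m$i *\<^sub>R blk z m))"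
    by (simp add: scaleR_sum_right matrix_vector_mult_scaleR linear_sum[OF matrix_vector_mul_linear] o_def)
  finally show ?thesis by (simp only: blk_WT)
qed

lemma bl_eta:
  fixes V :: "real^'n^'n"
  shows "bounded_linear (\<lambda>z::real^('n::finite \<times> 'd::finite). blk (transpose (kron V (mat 1 :: real^'d^'d)) *v z) i)"
  apply (rule linear_conv_bounded_linear[THEN iffD1])
  apply (rule linearI)
  by (simp_all add: matrix_vector_right_distrib matrix_vector_mult_scaleR blk_add blk_scaleR del: transpose_matrix_vector)

lemma ode_part:
  fixes V L B :: "real^'n::finite^'n" and M0 M1 M2 D H :: "real^'d::finite^'d"
    and dx dy :: "real \<Rightarrow> real^('n \<times> 'd)"
  assumes L: "transpose L = L" "L *v column i V = \<gamma> *\<^sub>R column i V"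
    and B: "transpose B = B" "B *v column i V = \<Gamma> *\<^sub>R column i V"
    and d: "(dx has_vector_derivative ((kron (mat 1) (M0 + M1 + M2) - \<epsilon> *\<^sub>R kron L D) *v dx t
                + lam *\<^sub>R (kron B H *v dy t))) (at t)"
  shows "((\<lambda>s. blk (transpose (kron V (mat 1 :: real^'d^'d)) *v dx s) i) has_vector_derivative
             ((M0 + M1 - (\<epsilon> * \<gamma>) *\<^sub>R D + M2) *v blk (transpose (kron V (mat 1 :: real^'d^'d)) *v dx t) i
              + (lam * \<Gamma>) *\<^sub>R (H *v blk (transpose (kron V (mat 1 :: real^'d^'d)) *v dy t) i))) (at t)"
proof -
  let ?W = "transpose (kron V (mat 1 :: real^'d^'d))"
  have I: "transpose (mat 1 :: real^'n^'n) = mat 1" "(mat 1 :: real^'n^'n) *v column i V = 1 *\<^sub>R column i V"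
    by (simp_all add: transpose_mat)
  have "((\<lambda>s. blk (?W *v dx s) i) has_vector_derivative
      blk (?W *v ((kron (mat 1) (M0 + M1 + M2) - \<epsilon> *\<^sub>R kron L D) *v dx t
                + lam *\<^sub>R (kron B H *v dy t))) i) (at t)"
    by (rule bounded_linear.has_vector_derivative[OF bl_eta d])
  moreover have "blk (?W *v ((kron (mat 1) (M0 + M1 + M2) - \<epsilon> *\<^sub>R kron L D) *v dx t
                + lam *\<^sub>R (kron B H *v dy t))) i
     = (M0 + M1 - (\<epsilon> * \<gamma>) *\<^sub>R D + M2) *v blk (?W *v dx t) i
              + (lam * \<Gamma>) *\<^sub>R (H *v blk (?W *v dy t) i)"
  proof -
    have e1: "blk (?W *v (kron (mat 1) (M0 + M1 + M2) *v dx t)) i = (M0 + M1 + M2) *v blk (?W *v dx t) i"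
      using key[OF I, of "M0 + M1 + M2" "dx t"] by simp
    have e2: "blk (?W *v (kron L D *v dx t)) i = \<gamma> *\<^sub>R (D *v blk (?W *v dx t) i)"
      using key[OF L, of D "dx t"] .
    have e3: "blk (?W *v (kron B H *v dy t)) i = \<Gamma> *\<^sub>R (H *v blk (?W *v dy t) i)"
      using key[OF B, of H "dy t"] .
    have "blk (?W *v ((kron (mat 1) (M0 + M1 + M2) - \<epsilon> *\<^sub>R kron L D) *v dx t
                + lam *\<^sub>R (kron B H *v dy t))) i
       = blk (?W *v (kron (mat 1) (M0 + M1 + M2) *v dx t)) i - \<epsilon> *\<^sub>R blk (?W *v (kron L D *v dx t)) i
         + lam *\<^sub>R blk (?W *v (kron B H *v dy t)) i"
      by (simp only: matrix_vector_mult_diff_rdistrib scaleR_matrix_vector_assoc[symmetric]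
           matrix_vector_right_distrib matrix_vector_mult_diff_distrib matrix_vector_mult_scaleR blk_add blk_diff blk_scaleR)
    also have "\<dots> = (M0 + M1 - (\<epsilon> * \<gamma>) *\<^sub>R D + M2) *v blk (?W *v dx t) i
              + (lam * \<Gamma>) *\<^sub>R (H *v blk (?W *v dy t) i)"
      unfolding e1 e2 e3
      by (simp add: algebra_simps scaleR_matrix_vector_assoc[symmetric])
    finally show ?thesis .
  qed
  ultimately show ?thesis by simp
qed


lemma sym_inner:
  fixes B :: "real^'n::finite^'n"
  assumes "transpose B = B"
  shows "(B *v x) \<bullet> y = x \<bullet> (B *v y)"
proof -
  have "x \<bullet> (B *v y) = (x v* B) \<bullet> y" by (simp add: dot_lmul_matrix)
  also have "x v* B = B *v x" by (metis assms vector_transpose_matrix)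
  finally show ?thesis by simp
qed

lemma eig_exists:
  fixes B :: "real^'n::finite^'n"
  assumes Bs: "transpose B = B" and S: "subspace S" and x0: "x0 \<in> S" "x0 \<noteq> 0"
    and inv: "\<forall>x\<in>S. B *v x \<in> S"
  shows "\<exists>v\<in>S. norm v = 1 \<and> B *v v = (v \<bullet> (B *v v)) *\<^sub>R v"
proof -
  let ?K = "sphere 0 1 \<inter> S"
  let ?f = "\<lambda>x. x \<bullet> (B *v x)"
  have Kc: "compact ?K" by (intro compact_Int_closed compact_sphere closed_subspace S)
  have Kne: "?K \<noteq> {}"
  proof -
    have "x0 /\<^sub>R norm x0 \<in> ?K" using x0 S by (simp add: subspace_scale)
    then show ?thesis by blast
  qed
  have fc: "continuous_on ?K ?f"
    by (intro continuous_intros linear_continuous_on matrix_vector_mul_linear)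
  obtain v where v: "v \<in> ?K" and vmax: "\<And>y. y \<in> ?K \<Longrightarrow> ?f y \<le> ?f v"
    using continuous_attains_sup[OF Kc Kne fc] by blast
  define m where "m = ?f v"
  have vS: "v \<in> S" and vn: "norm v = 1" using v by auto
  have vv: "v \<bullet> v = 1" using vn by (simp add: norm_eq_1)
  have Q: "?f x \<le> m * (x \<bullet> x)" if xS: "x \<in> S" for x
  proof (cases "x = 0")
    case True then show ?thesis by simp
  next
    case False
    let ?y = "x /\<^sub>R norm x"
    have "?y \<in> ?K" using xS False S by (simp add: subspace_scale)
    then have "?f ?y \<le> m" using vmax m_def by blast
    moreover have "?f ?y = ?f x / (norm x)^2"
      by (simp add: matrix_vector_mult_scaleR power2_eq_square divide_inverse)
    ultimately have "?f x \<le> m * (norm x)^2" using False by (simp add: divide_le_eq)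
    then show ?thesis by (simp add: power2_norm_eq_inner)
  qed
  define w where "w = B *v v - m *\<^sub>R v"
  have wS: "w \<in> S" unfolding w_def using inv vS S by (simp add: subspace_diff subspace_scale)
  have wv: "w \<bullet> v = 0" unfolding w_def using vv m_def by (simp add: inner_diff_left inner_diff_right inner_commute)
  have wBv: "w \<bullet> (B *v v) = w \<bullet> w" unfolding w_def using wv[unfolded w_def]
    by (simp add: inner_diff_right inner_diff_left)
  define a where "a = w \<bullet> w"
  define b where "b = w \<bullet> (B *v w) - m * a"
  have ineq: "2 * t * a + t^2 * b \<le> 0" for t
  proof -
    have xS: "v + t *\<^sub>R w \<in> S" using vS wS S by (simp add: subspace_add subspace_scale)
    have e1: "?f (v + t *\<^sub>R w) = m + 2 * t * a + t^2 * (w \<bullet> (B *v w))"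
    proof -
      have s: "v \<bullet> (B *v w) = w \<bullet> (B *v v)" using sym_inner[OF Bs, of v w] by (simp add: inner_commute)
      show ?thesis
        using s wBv unfolding m_def a_def
        by (simp add: matrix_vector_right_distrib matrix_vector_mult_scaleR inner_add_left inner_add_right power2_eq_square algebra_simps)
    qed
    have e2: "(v + t *\<^sub>R w) \<bullet> (v + t *\<^sub>R w) = 1 + t^2 * a"
      using vv wv unfolding a_def by (simp add: inner_add_left inner_add_right inner_commute power2_eq_square)
    have "m + 2 * t * a + t^2 * (w \<bullet> (B *v w)) \<le> m * (1 + t^2 * a)"
      using Q[OF xS] unfolding e1 e2 .
    then show ?thesis unfolding b_def by (simp add: algebra_simps)
  qed
  have a0: "a = 0"
  proof (rule ccontr)
    assume "a \<noteq> 0"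
    then have ap: "a > 0" unfolding a_def by simp
    define t where "t = a / (\<bar>b\<bar> + 1)"
    have tp: "t > 0" using ap unfolding t_def by simp
    have "2 * t * a + t^2 * b \<le> 0" by (rule ineq)
    then have "t * (2 * a + t * b) \<le> 0" by (simp add: power2_eq_square algebra_simps)
    then have "2 * a + t * b \<le> 0" using tp by (simp add: mult_le_0_iff)
    moreover have "t * \<bar>b\<bar> < a"
    proof -
      have "t * \<bar>b\<bar> = a * (\<bar>b\<bar> / (\<bar>b\<bar> + 1))" unfolding t_def by simp
      also have "\<dots> < a * 1" using ap by (intro mult_strict_left_mono) auto
      finally show ?thesis by simp
    qed
    moreover have "t * (- \<bar>b\<bar>) \<le> t * b" using tp by (intro mult_left_mono) auto
    then have "- (t * \<bar>b\<bar>) \<le> t * b" by simp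
    ultimately show False using ap by linarith
  qed
  then have "w = 0" unfolding a_def by simp
  then have "B *v v = m *\<^sub>R v" unfolding w_def by simp
  then show ?thesis using vS vn m_def by blast
qed


definition oeig :: "real^'n::finite^'n \<Rightarrow> (real^'n) set \<Rightarrow> bool" where
  "oeig B E \<longleftrightarrow> finite E \<and> pairwise orthogonal E \<and> (\<forall>x\<in>E. norm x = 1 \<and> B *v x = (x \<bullet> (B *v x)) *\<^sub>R x)"

lemma oeig_extend:
  fixes B :: "real^'n::finite^'n"
  assumes Bs: "transpose B = B" and E: "oeig B E" and c: "card E < CARD('n)"
  shows "\<exists>v. v \<notin> E \<and> oeig B (insert v E)"
proof -
  let ?S = "{y. \<forall>x\<in>E. x \<bullet> y = 0}"
  have S: "subspace ?S" by (auto simp: subspace_def inner_add_right)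
  have inv: "\<forall>y\<in>?S. B *v y \<in> ?S"
  proof (intro ballI, simp, intro ballI)
    fix y x assume y: "\<forall>x\<in>E. x \<bullet> y = 0" and x: "x \<in> E"
    have "x \<bullet> (B *v y) = (B *v x) \<bullet> y" using sym_inner[OF Bs] by simp
    also have "\<dots> = (x \<bullet> (B *v x)) * (x \<bullet> y)" using E x unfolding oeig_def
      by (metis inner_scaleR_left)
    also have "\<dots> = 0" using y x by simp
    finally show "x \<bullet> (B *v y) = 0" .
  qed
  have fin: "finite E" using E by (simp add: oeig_def)
  have "dim E < DIM(real^'n)" using dim_le_card'[OF fin] c by simp
  then obtain x0 where x0: "x0 \<noteq> 0" "\<And>y. y \<in> span E \<Longrightarrow> orthogonal x0 y"
    using orthogonal_to_subspace_exists by blast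
  have x0S: "x0 \<in> ?S" using x0(2) span_base by (fastforce simp: orthogonal_def inner_commute)
  obtain v where v: "v \<in> ?S" "norm v = 1" "B *v v = (v \<bullet> (B *v v)) *\<^sub>R v"
    using eig_exists[OF Bs S x0S x0(1) inv] by blast
  have vv: "v \<bullet> v = 1" using v(2) by (simp add: norm_eq_1)
  have vE: "v \<notin> E" using v(1) vv by force
  have "oeig B (insert v E)"
    using E v unfolding oeig_def
    by (auto simp: pairwise_insert orthogonal_def inner_commute)
  then show ?thesis using vE by blast
qed

lemma oeig_full:
  fixes B :: "real^'n::finite^'n"
  assumes Bs: "transpose B = B" and u: "oeig B {u}"
  shows "\<exists>E. oeig B E \<and> u \<in> E \<and> card E = CARD('n)"
proof -
  have "\<forall>k. Suc k \<le> CARD('n) \<longrightarrow> (\<exists>E. oeig B E \<and> u \<in> E \<and> card E = Suc k)"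
  proof
    fix k show "Suc k \<le> CARD('n) \<longrightarrow> (\<exists>E. oeig B E \<and> u \<in> E \<and> card E = Suc k)"
    proof (induction k)
      case 0 then show ?case using u by auto
    next
      case (Suc k)
      show ?case
      proof
        assume k: "Suc (Suc k) \<le> CARD('n)"
        then obtain E where E: "oeig B E" "u \<in> E" "card E = Suc k" using Suc by auto
        obtain v where v: "v \<notin> E" "oeig B (insert v E)" using oeig_extend[OF Bs E(1)] E(3) k by auto
        have "card (insert v E) = Suc (Suc k)" using v E by (simp add: oeig_def)
        then show "\<exists>E. oeig B E \<and> u \<in> E \<and> card E = Suc (Suc k)" using v E by blast
      qed
    qed
  qed
  moreover have "CARD('n) = Suc (CARD('n) - 1)" by simp
  ultimately show ?thesis by (metis le_refl)
qed

lemma L_perp: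
  fixes L :: "real^'n::finite^'n"
  assumes L_sym: "transpose L = L"
    and L_rows: "\<forall>i. (\<Sum>j\<in>UNIV. L $ i $ j) = 0"
    and L_mult: "dim {v. L *v v = \<gamma> *\<^sub>R v} = CARD('n) - 1"
    and g: "\<gamma> \<noteq> 0"
    and x: "(1::real^'n) \<bullet> x = 0"
  shows "L *v x = \<gamma> *\<^sub>R x"
proof -
  let ?E = "{v. L *v v = \<gamma> *\<^sub>R v}"
  let ?U = "{v. (1::real^'n) \<bullet> v = 0}"
  have L1: "L *v 1 = 0" using L_rows by (simp add: vec_eq_iff matrix_vector_mult_def)
  have sE: "subspace ?E" by (auto simp: subspace_def matrix_vector_right_distrib matrix_vector_mult_scaleR algebra_simps)
  have sU: "subspace ?U" by (rule subspace_hyperplane)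
  have sub: "?E \<subseteq> ?U"
  proof
    fix v assume "v \<in> ?E"
    then have "L *v v = \<gamma> *\<^sub>R v" by simp
    then have "\<gamma> * (1 \<bullet> v) = (L *v 1) \<bullet> v" using sym_inner[OF L_sym, of 1 v] by simp
    then show "v \<in> ?U" using L1 g by simp
  qed
  have "(1::real^'n) \<noteq> 0" by (simp add: vec_eq_iff)
  then have "dim ?U = CARD('n) - 1" using dim_hyperplane[of "1::real^'n"] by simp
  then have "?E = ?U" using subspace_dim_equal[OF sE sU sub] L_mult by simp
  then show ?thesis using x by blast
qed


lemma exV:
  fixes L B :: "real^'n::finite^'n"
  assumes L_sym: "transpose L = L"
    and L_rows: "\<forall>i. (\<Sum>j\<in>UNIV. L $ i $ j) = 0"
    and L_mult: "dim {v. L *v v = \<gamma> *\<^sub>R v} = CARD('n) - 1"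
    and g: "\<gamma> \<noteq> 0"
    and Bs: "transpose B = B"
    and B_rows: "\<forall>i. (\<Sum>j\<in>UNIV. B $ i $ j) = e"
  shows "\<exists>V :: real^'n^'n. \<exists>i1. orthogonal_matrix V \<and>
     column i1 V = (\<chi> j. 1 / sqrt (real CARD('n))) \<and>
     (\<forall>i. i \<noteq> i1 \<longrightarrow> L *v column i V = \<gamma> *\<^sub>R column i V \<and>
        B *v column i V = (column i V \<bullet> (B *v column i V)) *\<^sub>R column i V)"
proof -
  define u :: "real^'n" where "u = (\<chi> j. 1 / sqrt (real CARD('n)))"
  have N0: "real CARD('n) > 0" by simp
  have uu: "u \<bullet> u = 1"
    unfolding u_def inner_vec_def using N0 by (simp add: power2_eq_square[symmetric] power_divide)
  have Bu: "B *v u = e *\<^sub>R u"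
  proof -
    have "(B *v u) $ i = e * u $ i" for i
      using B_rows unfolding u_def by (simp add: matrix_vector_mult_def sum_divide_distrib[symmetric])
    then show ?thesis by (simp add: vec_eq_iff)
  qed
  have "u \<bullet> (B *v u) = e" using Bu uu by simp
  then have ou: "oeig B {u}" unfolding oeig_def using Bu uu by (simp add: norm_eq_1)
  obtain E where E: "oeig B E" "u \<in> E" "card E = CARD('n)" using oeig_full[OF Bs ou] by blast
  have finE: "finite E" using E by (simp add: oeig_def)
  obtain i1 :: 'n where True by simp
  have "card (UNIV - {i1}) = card (E - {u})" using E finE by (simp add: card_Diff_singleton)
  then obtain h where h: "bij_betw h (UNIV - {i1}) (E - {u})"
    using finite_same_card_bij[of "UNIV - {i1}" "E - {u}"] finE by auto
  define f where "f i = (if i = i1 then u else h i)" for i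
  have fE: "f i \<in> E" for i using h E(2) unfolding f_def bij_betw_def by auto
  have fu: "i \<noteq> i1 \<Longrightarrow> f i \<in> E - {u}" for i using h unfolding f_def bij_betw_def by auto
  have finj: "i \<noteq> j \<Longrightarrow> f i \<noteq> f j" for i j
  proof -
    assume ij: "i \<noteq> j"
    show "f i \<noteq> f j"
    proof (cases "i = i1 \<or> j = i1")
      case True then show ?thesis using fu ij unfolding f_def by (metis DiffD2 insertI1)
    next
      case False then show ?thesis using h ij unfolding f_def bij_betw_def inj_on_def by auto
    qed
  qed
  define V :: "real^'n^'n" where "V = (\<chi> r c. f c $ r)"
  have col: "column c V = f c" for c by (simp add: V_def column_def vec_eq_iff)
  have oV: "orthogonal_matrix V"
    unfolding orthogonal_matrix_orthonormal_columns col
  proof (intro conjI allI impI)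
    fix i show "norm (f i) = 1" using E(1) fE unfolding oeig_def by blast
  next
    fix i j :: 'n assume "i \<noteq> j"
    then have "f i \<noteq> f j" by (rule finj)
    then show "orthogonal (f i) (f j)" using E(1) fE unfolding oeig_def pairwise_def by blast
  qed
  have c1: "column i1 V = (\<chi> j. 1 / sqrt (real CARD('n)))" using col u_def f_def by simp
  have rest: "L *v column i V = \<gamma> *\<^sub>R column i V \<and>
        B *v column i V = (column i V \<bullet> (B *v column i V)) *\<^sub>R column i V" if i: "i \<noteq> i1" for i
  proof
    have fi: "f i \<in> E" "f i \<noteq> u" using fu[OF i] by auto
    then have "u \<bullet> f i = 0" using E(1,2) unfolding oeig_def pairwise_def orthogonal_def by metis
    then have "(1 / sqrt (real CARD('n))) * (\<Sum>j\<in>UNIV. f i $ j) = 0"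
      unfolding u_def inner_vec_def by (simp add: sum_distrib_left)
    then have "(\<Sum>j\<in>UNIV. f i $ j) = 0" using N0 by simp
    then have "(1::real^'n) \<bullet> f i = 0" by (simp add: inner_vec_def)
    then show "L *v column i V = \<gamma> *\<^sub>R column i V" unfolding col
      using L_perp[OF L_sym L_rows L_mult g] by blast
    show "B *v column i V = (column i V \<bullet> (B *v column i V)) *\<^sub>R column i V"
      unfolding col using E(1) fi unfolding oeig_def by blast
  qed
  show ?thesis using oV c1 rest by blast
qed

theorem mainTheorem2:
  fixes L B :: "real^'n^'n"
    and \<gamma> e \<epsilon> lam d1 :: real
    and xs ys :: "real \<Rightarrow> real^'d"
    and F1 F2 :: "real^'d \<Rightarrow> real^'d"
    and G1 G2 H1 H2 :: "real^'d \<Rightarrow> real^'d \<Rightarrow> real^'d"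
  assumes N2: "CARD('n) \<ge> 2"
    and L_sym: "transpose L = L"
    and L_rows: "\<forall>i. (\<Sum>j\<in>UNIV. L $ i $ j) = 0"
    and L_spec: "\<forall>c. (\<exists>v. v \<noteq> 0 \<and> L *v v = c *\<^sub>R v) \<longrightarrow> c = 0 \<or> c = \<gamma>"
    and L_simple0: "dim {v. L *v v = 0} = 1"
    and L_mult\<gamma>: "dim {v. L *v v = \<gamma> *\<^sub>R v} = CARD('n) - 1"
    and \<gamma>_ne0: "\<gamma> \<noteq> 0"
    and B_sym: "transpose B = B"
    and B_rows: "\<forall>i. (\<Sum>j\<in>UNIV. B $ i $ j) = e"
    and C1: "C1_map F1" "C1_map F2"
       "C1_map (\<lambda>p. G1 (fst p) (snd p))" "C1_map (\<lambda>p. G2 (fst p) (snd p))"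
       "C1_map (\<lambda>p. H1 (fst p) (snd p))" "C1_map (\<lambda>p. H2 (fst p) (snd p))"
  shows "\<exists>V :: real^'n^'n. \<exists>i1. \<exists>\<Gamma> :: 'n \<Rightarrow> real.
     orthogonal_matrix V \<and>
     column i1 V = (\<chi> j. 1 / sqrt (real CARD('n))) \<and>
     (\<forall>i. i \<noteq> i1 \<longrightarrow> B *v column i V = \<Gamma> i *\<^sub>R column i V) \<and>
     (\<forall>(dx :: real \<Rightarrow> real^('n \<times> 'd)) (dy :: real \<Rightarrow> real^('n \<times> 'd)).
        (\<forall>t. (dx has_vector_derivative
               ((kron (mat 1) (jac F1 (xs t)
                    + (\<epsilon> * d1) *\<^sub>R (jacJ G1 (xs t) (xs t) + jacD G1 (xs t) (xs t))
                    + (lam * e) *\<^sub>R jacJ H1 (xs t) (ys t))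
                 - \<epsilon> *\<^sub>R kron L (jacD G1 (xs t) (xs t))) *v dx t
                + lam *\<^sub>R (kron B (jacD H1 (xs t) (ys t)) *v dy t))) (at t)
          \<and> (dy has_vector_derivative
               ((kron (mat 1) (jac F2 (ys t)
                    + (\<epsilon> * d1) *\<^sub>R (jacJ G2 (ys t) (ys t) + jacD G2 (ys t) (ys t))
                    + (lam * e) *\<^sub>R jacJ H2 (ys t) (xs t))
                 - \<epsilon> *\<^sub>R kron L (jacD G2 (ys t) (ys t))) *v dy t
                + lam *\<^sub>R (kron B (jacD H2 (ys t) (xs t)) *v dx t))) (at t))
        \<longrightarrow>
        (\<forall>i t. i \<noteq> i1 \<longrightarrow>
          ((\<lambda>s. blk (transpose (kron V (mat 1 :: real^'d^'d)) *v dx s) i) has_vector_derivative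
             ((jac F1 (xs t)
               + (\<epsilon> * d1) *\<^sub>R (jacJ G1 (xs t) (xs t) + jacD G1 (xs t) (xs t))
               - (\<epsilon> * \<gamma>) *\<^sub>R jacD G1 (xs t) (xs t)
               + (lam * e) *\<^sub>R jacJ H1 (xs t) (ys t))
                *v blk (transpose (kron V (mat 1 :: real^'d^'d)) *v dx t) i
              + (lam * \<Gamma> i) *\<^sub>R (jacD H1 (xs t) (ys t)
                *v blk (transpose (kron V (mat 1 :: real^'d^'d)) *v dy t) i))) (at t)
          \<and>
          ((\<lambda>s. blk (transpose (kron V (mat 1 :: real^'d^'d)) *v dy s) i) has_vector_derivative
             ((jac F2 (ys t)
               + (\<epsilon> * d1) *\<^sub>R (jacJ G2 (ys t) (ys t) + jacD G2 (ys t) (ys t))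
               - (\<epsilon> * \<gamma>) *\<^sub>R jacD G2 (ys t) (ys t)
               + (lam * e) *\<^sub>R jacJ H2 (ys t) (xs t))
                *v blk (transpose (kron V (mat 1 :: real^'d^'d)) *v dy t) i
              + (lam * \<Gamma> i) *\<^sub>R (jacD H2 (ys t) (xs t)
                *v blk (transpose (kron V (mat 1 :: real^'d^'d)) *v dx t) i))) (at t)))"
  proof -
  obtain V i1 where V: "orthogonal_matrix V" "column i1 V = (\<chi> j. 1 / sqrt (real CARD('n)))"
    "\<forall>i. i \<noteq> i1 \<longrightarrow> L *v column i V = \<gamma> *\<^sub>R column i V \<and>
        B *v column i V = (column i V \<bullet> (B *v column i V)) *\<^sub>R column i V"
    using exV[OF L_sym L_rows L_mult\<gamma> \<gamma>_ne0 B_sym B_rows] by blast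
  define \<Gamma> where "\<Gamma> i = column i V \<bullet> (B *v column i V)" for i
  show ?thesis
    apply (rule exI[of _ V], rule exI[of _ i1], rule exI[of _ \<Gamma>])
    apply (intro conjI)
       apply (rule V(1))
      apply (rule V(2))
     apply (unfold \<Gamma>_def)[1]
     apply (intro allI impI)
     apply (rule V(3)[rule_format, THEN conjunct2], assumption)
    apply (intro allI impI)
    apply (rule conjI)
     apply (rule ode_part[OF L_sym _ B_sym])
       apply (rule V(3)[rule_format, THEN conjunct1], assumption)
      apply (unfold \<Gamma>_def)[1]
      apply (rule V(3)[rule_format, THEN conjunct2], assumption)
     apply (drule_tac x=t in spec, erule conjE, assumption)
    apply (rule ode_part[OF L_sym _ B_sym])
      apply (rule V(3)[rule_format, THEN conjunct1], assumption)
     apply (unfold \<Gamma>_def)[1]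
     apply (rule V(3)[rule_format, THEN conjunct2], assumption)
    apply (drule_tac x=t in spec, erule conjE, assumption)
    done
qed

end
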